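(* For all binary words $\mathfrak{s},\mathfrak{t}$ over $\{\mathsf{A},\mathsf{B}\}$, \[ \mathsf{P}(\mathfrak{s}\circ\mathfrak{t}) = \mathsf{P}_{\mathsf{A}}(\mathfrak{s})\,\mathsf{P}^{\mathsf{B}}(\mathfrak{t}) + \mathsf{P}_{\mathsf{B}}(\mathfrak{s})\,\mathsf{P}^{\mathsf{A}}(\mathfrak{t}) - 1. \]
   Context: $\circ$ denotes concatenation. For a word $\mathfrak{s}$, $\mathsf{P}(\mathfrak{s})$ is the number of distinct words that are subsequences (not necessarily contiguous) of $\mathfrak{s}$, the empty word included. $\mathsf{P}^{\mathsf{A}}(\mathfrak{s})$ (resp. $\mathsf{P}^{\mathsf{B}}(\mathfrak{s})$) is the number of distinct subsequences of $\mathfrak{s}$ that start with $\mathsf{A}$ (resp. $\mathsf{B}$), plus one for the empty subsequence; $\mathsf{P}_{\mathsf{A}}(\mathfrak{s})$ (resp. $\mathsf{P}_{\mathsf{B}}(\mathfrak{s})$) is the number of distinct subsequences of $\mathfrak{s}$ that end with $\mathsf{A}$ (resp. $\mathsf{B}$), plus one for the empty subsequence. *)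

theory Defs
  imports Main
begin

datatype letter = A | B

definition subseqset :: "letter list \<Rightarrow> letter list set" where
  "subseqset s = set (subseqs s)"

definition P :: "letter list \<Rightarrow> nat" where
  "P s = card (subseqset s)"

text \<open>P^c(s): distinct subsequences starting with c, plus one (empty subsequence).\<close>
definition Pstart :: "letter \<Rightarrow> letter list \<Rightarrow> nat" where
  "Pstart c s = card {u \<in> subseqset s. u \<noteq> [] \<and> hd u = c} + 1"

text \<open>P_c(s): distinct subsequences ending with c, plus one (empty subsequence).\<close>
definition Pend :: "letter \<Rightarrow> letter list \<Rightarrow> nat" where
  "Pend c s = card {u \<in> subseqset s. u \<noteq> [] \<and> last u = c} + 1"

end

theory Submission
  imports Defs "HOL-Library.Sublist"
begin

lemma subseq_snoc_iff:
  "subseq u (s @ [c]) \<longleftrightarrow> subseq u s \<or> (u \<noteq> [] \<and> last u = c \<and> subseq (butlast u) s)"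
proof (induction s arbitrary: u)
  case Nil
  then show ?case by (cases u) auto
next
  case (Cons x s)
  show ?case
  proof (cases u)
    case Nil then show ?thesis by simp
  next
    case (Cons y u')
    then show ?thesis using Cons.IH by (cases "y = x") auto
  qed
qed

lemma ss_def': "subseqset s = {u. subseq u s}"
  by (simp add: subseqset_def set_subseqs_eq)

lemma fin_ss: "finite (subseqset s)"
  by (simp add: subseqset_def)

lemma other: "d \<noteq> c \<Longrightarrow> d = A \<and> c = B \<or> d = B \<and> c = A"
  by (cases d; cases c) auto

lemma P_split: "int (P s) = int (Pend A s) + int (Pend B s) - 1"
proof -
  have eq: "subseqset s = {[]} \<union> ({u \<in> subseqset s. u \<noteq> [] \<and> last u = A} \<union> {u \<in> subseqset s. u \<noteq> [] \<and> last u = B})"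
    by (auto simp: ss_def' intro: letter.exhaust)
  have "card (subseqset s) = 1 + (card {u \<in> subseqset s. u \<noteq> [] \<and> last u = A} + card {u \<in> subseqset s. u \<noteq> [] \<and> last u = B})"
    apply (subst eq)
    apply (subst card_Un_disjoint)
       apply (auto simp: fin_ss)
    apply (subst card_Un_disjoint)
       apply (auto simp: fin_ss)
    done
  then show ?thesis by (simp add: P_def Pend_def)
qed

lemma P_split2: "int (P s) = int (Pstart A s) + int (Pstart B s) - 1"
proof -
  have eq: "subseqset s = {[]} \<union> ({u \<in> subseqset s. u \<noteq> [] \<and> hd u = A} \<union> {u \<in> subseqset s. u \<noteq> [] \<and> hd u = B})"
    by (auto simp: ss_def' intro: letter.exhaust)
  have "card (subseqset s) = 1 + (card {u \<in> subseqset s. u \<noteq> [] \<and> hd u = A} + card {u \<in> subseqset s. u \<noteq> [] \<and> hd u = B})"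
    apply (subst eq)
    apply (subst card_Un_disjoint)
       apply (auto simp: fin_ss)
    apply (subst card_Un_disjoint)
       apply (auto simp: fin_ss)
    done
  then show ?thesis by (simp add: P_def Pstart_def)
qed

lemma Pend_snoc_same: "Pend c (s @ [c]) = P s + 1"
proof -
  have "{u \<in> subseqset (s @ [c]). u \<noteq> [] \<and> last u = c} = (\<lambda>v. v @ [c]) ` subseqset s"
  proof (rule set_eqI, rule iffI)
    fix u assume "u \<in> {u \<in> subseqset (s @ [c]). u \<noteq> [] \<and> last u = c}"
    then have h: "subseq u (s @ [c])" "u \<noteq> []" "last u = c" by (auto simp: ss_def')
    then have "subseq (butlast u) s"
      using subseq_snoc_iff[of u s c] subseq_order.order_trans[OF prefix_imp_subseq[OF prefixeq_butlast[of u]]]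
      by auto
    moreover have "u = butlast u @ [c]" using h by (metis append_butlast_last_id)
    ultimately show "u \<in> (\<lambda>v. v @ [c]) ` subseqset s" by (auto simp: ss_def')
  next
    fix u assume "u \<in> (\<lambda>v. v @ [c]) ` subseqset s"
    then show "u \<in> {u \<in> subseqset (s @ [c]). u \<noteq> [] \<and> last u = c}"
      by (auto simp: ss_def' subseq_snoc_iff)
  qed
  moreover have "card ((\<lambda>v. v @ [c]) ` subseqset s) = card (subseqset s)"
    by (rule card_image) (auto simp: inj_on_def)
  ultimately show ?thesis by (simp add: Pend_def P_def)
qed

lemma Pend_snoc_other: "d \<noteq> c \<Longrightarrow> Pend d (s @ [c]) = Pend d s"
proof -
  assume "d \<noteq> c"
  then have "{u \<in> subseqset (s @ [c]). u \<noteq> [] \<and> last u = d} = {u \<in> subseqset s. u \<noteq> [] \<and> last u = d}"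
    by (auto simp: ss_def' subseq_snoc_iff)
  then show ?thesis by (simp add: Pend_def)
qed

lemma Pstart_Cons_same: "Pstart c (c # t) = P t + 1"
proof -
  have "{u \<in> subseqset (c # t). u \<noteq> [] \<and> hd u = c} = Cons c ` subseqset t"
  proof (rule set_eqI, rule iffI)
    fix x assume "x \<in> {u \<in> subseqset (c # t). u \<noteq> [] \<and> hd u = c}"
    then have h: "subseq x (c # t)" "x \<noteq> []" "hd x = c" by (auto simp: ss_def')
    then have x: "x = c # tl x" by (metis list.collapse)
    then have "subseq (tl x) t" using h(1) by (metis list_emb_Cons_iff1)
    then show "x \<in> Cons c ` subseqset t" using x by (auto simp: ss_def' intro!: image_eqI[of _ _ "tl x"])
  next
    fix x assume "x \<in> Cons c ` subseqset t"
    then show "x \<in> {u \<in> subseqset (c # t). u \<noteq> [] \<and> hd u = c}" by (auto simp: ss_def')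
  qed
  moreover have "card (Cons c ` subseqset t) = card (subseqset t)"
    by (rule card_image) (auto simp: inj_on_def)
  ultimately show ?thesis by (simp add: Pstart_def P_def)
qed

lemma Pstart_Cons_other: "d \<noteq> c \<Longrightarrow> Pstart d (c # t) = Pstart d t"
proof -
  assume "d \<noteq> c"
  then have "{u \<in> subseqset (c # t). u \<noteq> [] \<and> hd u = d} = {u \<in> subseqset t. u \<noteq> [] \<and> hd u = d}"
    by (auto simp: subseqset_def Let_def)
  then show ?thesis by (simp add: Pstart_def)
qed

lemma Pstart_Nil: "Pstart c [] = 1"
  by (simp add: Pstart_def subseqset_def)

theorem theorem2:
  fixes s t :: "letter list"
  shows "int (P (s @ t)) = int (Pend A s) * int (Pstart B t) + int (Pend B s) * int (Pstart A t) - 1"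
proof (induction t arbitrary: s)
  case Nil
  then show ?case using P_split[of s] by (simp add: Pstart_Nil)
next
  case (Cons c t)
  have e: "s @ c # t = (s @ [c]) @ t" by simp
  show ?case
  proof (cases c)
    case A
    show ?thesis
      using Cons.IH[of "s @ [A]"] P_split[of s] P_split2[of t]
      by (simp add: A Pend_snoc_same Pend_snoc_other Pstart_Cons_same Pstart_Cons_other algebra_simps)
  next
    case B
    show ?thesis
      using Cons.IH[of "s @ [B]"] P_split[of s] P_split2[of t]
      by (simp add: B Pend_snoc_same Pend_snoc_other Pstart_Cons_same Pstart_Cons_other algebra_simps)
  qed
qed

end
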